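(* Consider the PSSG described in the context in the MIDDLE-MIDDLE scenario: $(L+x_1)\lambda<k_1\mu_1\le(L+x_2)\lambda$ and $(L-x_2)\lambda<k_2\mu_2\le(L-x_1)\lambda$, and assume $k_1\mu_1+k_2\mu_2>2L\lambda$. Then for any prices $p_1,p_2\in[p_{\min},p_{\max}]$ the equation $$k_pd(p_1-p_2)+k_l(2x-x_1-x_2)+k_q\big(q_1(x+L)-q_2(L-x)\big)=0$$ has a unique root $x^*$, which satisfies $L-\frac{k_2\mu_2}{\lambda}<x^*<\frac{k_1\mu_1}{\lambda}-L$, and the Nash equilibrium of the PSSG is: every PEV at $x\in[-L,x^*]$ selects station 1 and every PEV at $x\in(x^*,L]$ selects station 2.
   Context: The system is the segment $[-L,L]$ ($L>0$) with two charging stations located at $x_1<x_2$, $-L<x_1<x_2<L$. Station $i\in\{1,2\}$ has $k_i\ge 1$ (integer) identical charging ports, PEV service times with mean $1/\mu_i$ ($\mu_i>0$) and variance $\sigma_i^2$, and announces a price $p_i\in[p_{\min},p_{\max}]$. A continuum of PEVs is uniformly distributed on $[-L,L]$, generating charging requests at rate $\lambda>0$ per unit length. Each PEV at location $x$ selects station 1 or 2, possibly at random; a strategy profile is described by the probability $\omega(x)\in[0,1]$ that the PEV at $x$ selects station 1. Let $a_1=\int_{-L}^{L}\omega(x)\,dx$ and $a_2=2L-a_1$. For $0\le a<k_i\mu_i/\lambda$, $$q_i(a)=\frac{a\lambda\,(\sigma_i^2+\frac{1}{\mu_i^2})\,\rho^{k_i-1}}{2(k_i-1)!\,(k_i-\rho)^2\Big[\sum_{m=0}^{k_i-1}\frac{\rho^m}{m!}+\frac{\rho^{k_i}}{(k_i-1)!(k_i-\rho)}\Big]},\qquad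 \rho=\frac{a\lambda}{\mu_i},$$ is the mean waiting time at station $i$, and $q_i(a)=+\infty$ if $a\ge k_i\mu_i/\lambda$ (overloaded queue). Given $a_1,a_2$ (which a single PEV cannot change), a PEV at $x$ selecting station $i$ gets payoff $U(i;x)=-k_l|x-x_i|-k_q\,q_i(a_i)-k_p\,d\,p_i$, with constants $k_l,k_q,k_p,d>0$; a randomized choice yields the expected payoff. A Nash equilibrium of the PSSG is a profile in which every PEV's (possibly mixed) choice maximizes its expected payoff given $a_1,a_2$. *)

theory Defs
  imports "HOL-Analysis.Analysis"
begin

text \<open>Mean waiting time q_i(a) at a station with k ports, mean service time 1/mu,
  service-time standard deviation sg (variance sg^2), request rate lam per unit length.\<close>
definition qwait :: "nat \<Rightarrow> real \<Rightarrow> real \<Rightarrow> real \<Rightarrow> real \<Rightarrow> ereal" where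
  "qwait k mu sg lam a =
     (if a < real k * mu / lam then
        (let \<rho> = a * lam / mu in
         ereal ((a * lam * (sg\<^sup>2 + 1 / mu\<^sup>2) * \<rho> ^ (k - 1)) /
           (2 * fact (k - 1) * (real k - \<rho>)\<^sup>2 *
             ((\<Sum>m<k. \<rho> ^ m / fact m) + \<rho> ^ k / (fact (k - 1) * (real k - \<rho>))))))
      else \<infinity>)"

definition payoff :: "real \<Rightarrow> real \<Rightarrow> real \<Rightarrow> real \<Rightarrow> real \<Rightarrow> real \<Rightarrow> ereal \<Rightarrow> real \<Rightarrow> ereal" where
  "payoff kl kq kp d xi pri Q x = ereal (- kl * \<bar>x - xi\<bar> - kp * d * pri) - ereal kq * Q"

definition mixed_payoff :: "real \<Rightarrow> ereal \<Rightarrow> ereal \<Rightarrow> ereal" where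
  "mixed_payoff w u1 u2 = ereal w * u1 + ereal (1 - w) * u2"

text \<open>Nash equilibrium of the PSSG: omega x = probability that the PEV at x selects station 1.\<close>
definition pssg_NE ::
  "real \<Rightarrow> real \<Rightarrow> real \<Rightarrow> nat \<Rightarrow> real \<Rightarrow> real \<Rightarrow> nat \<Rightarrow> real \<Rightarrow> real \<Rightarrow> real \<Rightarrow>
   real \<Rightarrow> real \<Rightarrow> real \<Rightarrow> real \<Rightarrow> real \<Rightarrow> real \<Rightarrow> (real \<Rightarrow> real) \<Rightarrow> bool" where
  "pssg_NE L x1 x2 k1 mu1 sg1 k2 mu2 sg2 lam kl kq kp d p1 p2 \<omega> \<longleftrightarrow>
     (\<forall>x\<in>{-L..L}. 0 \<le> \<omega> x \<and> \<omega> x \<le> 1) \<and> \<omega> integrable_on {-L..L} \<and>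
     (let a1 = integral {-L..L} \<omega>; a2 = 2 * L - a1;
          Q1 = qwait k1 mu1 sg1 lam a1; Q2 = qwait k2 mu2 sg2 lam a2 in
      \<forall>x\<in>{-L..L}. \<forall>w\<in>{0..1}.
        mixed_payoff w (payoff kl kq kp d x1 p1 Q1 x) (payoff kl kq kp d x2 p2 Q2 x)
        \<le> mixed_payoff (\<omega> x) (payoff kl kq kp d x1 p1 Q1 x) (payoff kl kq kp d x2 p2 Q2 x))"

definition pssg_eq ::
  "real \<Rightarrow> real \<Rightarrow> real \<Rightarrow> nat \<Rightarrow> real \<Rightarrow> real \<Rightarrow> nat \<Rightarrow> real \<Rightarrow> real \<Rightarrow> real \<Rightarrow>
   real \<Rightarrow> real \<Rightarrow> real \<Rightarrow> real \<Rightarrow> real \<Rightarrow> real \<Rightarrow> real \<Rightarrow> ereal" where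
  "pssg_eq L x1 x2 k1 mu1 sg1 k2 mu2 sg2 lam kl kq kp d p1 p2 x =
     ereal (kp * d * (p1 - p2) + kl * (2 * x - x1 - x2)) +
     ereal kq * (qwait k1 mu1 sg1 lam (x + L) - qwait k2 mu2 sg2 lam (L - x))"

end

theory Submission imports Defs begin


definition Qf :: "nat \<Rightarrow> real \<Rightarrow> real \<Rightarrow> real \<Rightarrow> real \<Rightarrow> real" where
  "Qf k mu sg lam a =
        (let \<rho> = a * lam / mu in
         ((a * lam * (sg\<^sup>2 + 1 / mu\<^sup>2) * \<rho> ^ (k - 1)) /
           (2 * fact (k - 1) * (real k - \<rho>)\<^sup>2 *
             ((\<Sum>m<k. \<rho> ^ m / fact m) + \<rho> ^ k / (fact (k - 1) * (real k - \<rho>))))))"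

lemma qwait_eq: "qwait k mu sg lam a = (if a < real k * mu / lam then ereal (Qf k mu sg lam a) else \<infinity>)"
  by (simp add: qwait_def Qf_def Let_def)

definition Tm :: "nat \<Rightarrow> real \<Rightarrow> real" where
  "Tm k r = (\<Sum>m<k. 1 / (fact m * r ^ (k - m)))"

definition Hf :: "nat \<Rightarrow> real \<Rightarrow> real" where
  "Hf k r = (real k - r) * (1 + fact (k - 1) * (real k - r) * Tm k r)"

lemma Tm_nonneg: "0 < r \<Longrightarrow> 0 \<le> Tm k r"
  unfolding Tm_def by (intro sum_nonneg) simp

lemma Tm_anti: "0 < r \<Longrightarrow> r \<le> s \<Longrightarrow> Tm k s \<le> Tm k r"
  unfolding Tm_def
proof (intro sum_mono)
  fix m assume "0 < r" "r \<le> s"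
  have "r ^ (k - m) \<le> s ^ (k - m)" using \<open>0<r\<close> \<open>r\<le>s\<close> by (intro power_mono) auto
  moreover have "0 < fact m * r ^ (k-m)" using \<open>0<r\<close> by simp
  moreover have "0 < fact m * s ^ (k-m)" using \<open>0<r\<close> \<open>r\<le>s\<close> by simp
  ultimately show "1 / (fact m * s ^ (k - m)) \<le> 1 / (fact m * r ^ (k - m))"
    by (intro divide_left_mono mult_left_mono) auto
qed

lemma Hf_pos: "0 < r \<Longrightarrow> r < real k \<Longrightarrow> 0 < Hf k r"
  unfolding Hf_def using Tm_nonneg[of r k]
  by (intro mult_pos_pos) (auto intro!: add_pos_nonneg mult_nonneg_nonneg)

lemma Hf_strict_anti: "0 < r \<Longrightarrow> r < s \<Longrightarrow> s < real k \<Longrightarrow> Hf k s < Hf k r"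
proof -
  assume h: "0 < r" "r < s" "s < real k"
  define As where "As = 1 + fact (k - 1) * (real k - s) * Tm k s"
  define Ar where "Ar = 1 + fact (k - 1) * (real k - r) * Tm k r"
  have t: "Tm k s \<le> Tm k r" "0 \<le> Tm k s" using h Tm_anti[of r s k] Tm_nonneg[of s k] by auto
  have "fact (k - 1) * (real k - s) * Tm k s \<le> fact (k - 1) * (real k - r) * Tm k r"
    using h t by (intro mult_mono) auto
  hence "As \<le> Ar" unfolding As_def Ar_def by simp
  have "1 \<le> As" unfolding As_def using h t by simp
  have "(real k - s) * As \<le> (real k - s) * Ar" using h \<open>As \<le> Ar\<close> by (intro mult_left_mono) auto
  also have "\<dots> < (real k - r) * Ar" using h \<open>1 \<le> As\<close> \<open>As \<le> Ar\<close> by (intro mult_strict_right_mono) auto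
  finally show ?thesis unfolding Hf_def As_def Ar_def .
qed

lemma alg_aux:
  fixes F D P T mu sg :: real
  assumes "F > 0" "D > 0" "P > 0" "mu > 0" "T \<ge> 0"
  shows "mu * (sg\<^sup>2 + 1 / mu\<^sup>2) * P / (2 * F * D\<^sup>2 * (P * T + P / (F * D)))
       = (mu * sg\<^sup>2 + 1 / mu) / (2 * (D * (1 + F * D * T)))"
proof -
  have "P * T + P / (F * D) = P * (1 + F * D * T) / (F * D)" using assms by (simp add: field_simps)
  moreover have "1 + F * D * T > 0" using assms by (simp add: add_pos_nonneg)
  moreover have "mu * (sg\<^sup>2 + 1 / mu\<^sup>2) = mu * sg\<^sup>2 + 1 / mu" using assms
    by (simp add: field_simps power2_eq_square)
  moreover have "2 * F * D\<^sup>2 * (P * (1 + F * D * T) / (F * D)) = P * (2 * (D * (1 + F * D * T)))"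
    using assms by (simp add: field_simps power2_eq_square)
  ultimately show ?thesis using assms by simp
qed

lemma Qf_red:
  assumes k: "k \<ge> 1" and mu: "mu > 0" and lam: "lam > 0" and a: "0 < a" "a < real k * mu / lam"
  shows "Qf k mu sg lam a = (mu * sg\<^sup>2 + 1 / mu) / (2 * Hf k (a * lam / mu))"
proof -
  define r where "r = a * lam / mu"
  have r: "0 < r" "r < real k" using a mu lam unfolding r_def by (auto simp: field_simps)
  have al: "a * lam = r * mu" unfolding r_def using mu by simp
  have S: "(\<Sum>m<k. r ^ m / fact m) = r ^ k * Tm k r"
    unfolding Tm_def sum_distrib_left
  proof (intro sum.cong refl)
    fix m assume "m \<in> {..<k}"
    hence "r ^ k = r ^ m * r ^ (k - m)" by (simp add: power_add[symmetric])
    thus "r ^ m / fact m = r ^ k * (1 / (fact m * r ^ (k - m)))" using r by (simp add: field_simps)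
  qed
  have pk: "r * r ^ (k - 1) = r ^ k" using k by (cases k) auto
  have fpos: "(0::real) < fact (k - 1)" by simp
  have kr: "real k - r > 0" using r by simp
  have "Qf k mu sg lam a = (r * mu * (sg\<^sup>2 + 1 / mu\<^sup>2) * r ^ (k - 1)) /
           (2 * fact (k - 1) * (real k - r)\<^sup>2 *
             (r ^ k * Tm k r + r ^ k / (fact (k - 1) * (real k - r))))"
    unfolding Qf_def Let_def unfolding r_def[symmetric] unfolding S al ..
  also have "\<dots> = mu * (sg\<^sup>2 + 1 / mu\<^sup>2) * r ^ k /
           (2 * fact (k - 1) * (real k - r)\<^sup>2 *
             (r ^ k * Tm k r + r ^ k / (fact (k - 1) * (real k - r))))"
    using pk by (simp add: mult_ac)
  also have "\<dots> = (mu * sg\<^sup>2 + 1 / mu) / (2 * Hf k r)"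
    unfolding Hf_def using mu r fpos kr Tm_nonneg[of r k] by (intro alg_aux) auto
  finally show ?thesis unfolding r_def .
qed

lemma Qf_pos:
  assumes k: "k \<ge> 1" and mu: "mu > 0" and lam: "lam > 0" and a: "0 < a" "a < real k * mu / lam"
  shows "0 < Qf k mu sg lam a"
proof -
  have r: "0 < a * lam / mu" "a * lam / mu < real k" using a mu lam by (auto simp: field_simps)
  have "0 < mu * sg\<^sup>2 + 1 / mu" using mu by (simp add: add_nonneg_pos)
  thus ?thesis unfolding Qf_red[OF assms] using Hf_pos[OF r] by simp
qed

lemma Qf_zero: "Qf k mu sg lam 0 = 0" by (simp add: Qf_def)

lemma Qf_strict_mono:
  assumes k: "k \<ge> 1" and mu: "mu > 0" and lam: "lam > 0" and ab: "0 \<le> a" "a < b" "b < real k * mu / lam"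
  shows "Qf k mu sg lam a < Qf k mu sg lam b"
proof (cases "a = 0")
  case True thus ?thesis using Qf_pos[OF k mu lam, of b sg] ab by (simp add: Qf_zero)
next
  case False
  hence a0: "0 < a" using ab by simp
  have r: "0 < a * lam / mu" "a * lam / mu < b * lam / mu" "b * lam / mu < real k"
    using a0 ab mu lam by (auto simp: field_simps)
  have h: "Hf k (b * lam / mu) < Hf k (a * lam / mu)" by (rule Hf_strict_anti[OF r])
  have hp: "0 < Hf k (b * lam / mu)" using r by (intro Hf_pos) auto
  have "0 < mu * sg\<^sup>2 + 1 / mu" using mu by (simp add: add_nonneg_pos)
  moreover have "Qf k mu sg lam a = (mu * sg\<^sup>2 + 1 / mu) / (2 * Hf k (a * lam / mu))"
    using Qf_red[OF k mu lam a0 order.strict_trans[OF ab(2,3)]] .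
  moreover have "Qf k mu sg lam b = (mu * sg\<^sup>2 + 1 / mu) / (2 * Hf k (b * lam / mu))"
    using Qf_red[OF k mu lam _ ab(3)] a0 ab by simp
  moreover have "(mu * sg\<^sup>2 + 1 / mu) / (2 * Hf k (a * lam / mu)) < (mu * sg\<^sup>2 + 1 / mu) / (2 * Hf k (b * lam / mu))"
    using h hp \<open>0 < mu * sg\<^sup>2 + 1 / mu\<close>
    by (intro divide_strict_left_mono) (auto intro!: mult_pos_pos)
  ultimately show ?thesis by simp
qed

lemma S_ge1: "k \<ge> 1 \<Longrightarrow> 0 \<le> (r::real) \<Longrightarrow> 1 \<le> (\<Sum>m<k. r ^ m / fact m)"
proof -
  assume "k \<ge> 1" "0 \<le> r"
  have "(\<lambda>m. r ^ m / fact m) 0 \<le> (\<Sum>m<k. r ^ m / fact m)"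
    using \<open>k\<ge>1\<close> \<open>0\<le>r\<close> by (intro member_le_sum) auto
  thus ?thesis by simp
qed

lemma Qf_tendsto:
  assumes k: "k \<ge> 1" and mu: "mu > 0" and lam: "lam > 0" and g: "(g \<longlongrightarrow> a0) F"
    and a0: "0 \<le> a0" "a0 < real k * mu / lam"
  shows "((\<lambda>x. Qf k mu sg lam (g x)) \<longlongrightarrow> Qf k mu sg lam a0) F"
proof -
  define r where "r = a0 * lam / mu"
  have r: "0 \<le> r" "r < real k" using a0 mu lam unfolding r_def by (auto simp: field_simps)
  have S: "1 \<le> (\<Sum>m<k. r ^ m / fact m)" using S_ge1[OF k r(1)] .
  have "0 \<le> r ^ k / (fact (k - 1) * (real k - r))" using r by simp
  hence pos: "0 < (\<Sum>m<k. r ^ m / fact m) + r ^ k / (fact (k - 1) * (real k - r))" using S by linarith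
  have p1: "0 < 2 * fact (k - 1) * (real k - r)\<^sup>2" using r by simp
  have ne: "2 * fact (k - 1) * (real k - r)\<^sup>2 *
             ((\<Sum>m<k. r ^ m / fact m) + r ^ k / (fact (k - 1) * (real k - r))) \<noteq> 0"
    using mult_pos_pos[OF p1 pos] by (rule dual_order.strict_implies_not_eq)
  have ne2: "fact (k - 1) * (real k - r) \<noteq> 0" using r by simp
  show ?thesis unfolding Qf_def Let_def
    by (intro tendsto_intros g) (use ne ne2 mu in \<open>simp_all add: r_def\<close>)
qed

lemma Qf_at_top:
  assumes k: "k \<ge> 1" and mu: "mu > 0" and lam: "lam > 0" and g: "(g \<longlongrightarrow> real k * mu / lam) F"
    and ev: "eventually (\<lambda>x. 0 < g x \<and> g x < real k * mu / lam) F"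
  shows "filterlim (\<lambda>x. Qf k mu sg lam (g x)) at_top F"
proof -
  define C where "C = (mu * sg\<^sup>2 + 1 / mu) / 2"
  have C: "0 < C" unfolding C_def using mu by (simp add: add_nonneg_pos)
  have kk: "real k * mu / lam * lam / mu = real k" using mu lam by simp
  have kp: "real k > 0" using k by simp
  have lim: "((\<lambda>x. Hf k (g x * lam / mu)) \<longlongrightarrow> Hf k (real k * mu / lam * lam / mu)) F"
    unfolding Hf_def Tm_def
    by (intro tendsto_intros g) (use kp mu lam in \<open>simp_all add: kk\<close>)
  hence lim0: "((\<lambda>x. Hf k (g x * lam / mu)) \<longlongrightarrow> 0) F" unfolding kk by (simp add: Hf_def)
  have evp: "eventually (\<lambda>x. 0 < Hf k (g x * lam / mu)) F"
    using ev by eventually_elim (intro Hf_pos, use mu lam in \<open>auto simp: field_simps\<close>)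
  have "filterlim (\<lambda>x. C * inverse (Hf k (g x * lam / mu))) at_top F"
    by (intro filterlim_tendsto_pos_mult_at_top[OF tendsto_const C] filterlim_inverse_at_top lim0 evp)
  moreover have "eventually (\<lambda>x. C * inverse (Hf k (g x * lam / mu)) = Qf k mu sg lam (g x)) F"
    using ev
  proof eventually_elim
    case (elim x)
    have "Qf k mu sg lam (g x) = (mu * sg\<^sup>2 + 1 / mu) / (2 * Hf k (g x * lam / mu))"
      using elim by (intro Qf_red[OF k mu lam]) auto
    thus ?case unfolding C_def by (simp only: divide_inverse mult_inverse_of_nat_commute inverse_mult_distrib mult_ac)
  qed
  ultimately show ?thesis by (rule filterlim_cong[OF refl refl, THEN iffD1, rotated])
qed



lemma mp_fin: "mixed_payoff w (ereal a) (ereal b) = ereal (w * a + (1 - w) * b)"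
  by (simp add: mixed_payoff_def)

lemma pay_fin: "payoff kl kq kp d xi pri (ereal q) x = ereal (- kl * \<bar>x - xi\<bar> - kp * d * pri - kq * q)"
  by (simp add: payoff_def)

lemma pay_inf: "kq > 0 \<Longrightarrow> payoff kl kq kp d xi pri \<infinity> x = -\<infinity>"
  by (simp add: payoff_def)

lemma ne_point1:
  assumes "\<forall>w\<in>{0..1}. mixed_payoff w (ereal u1) (ereal u2) \<le> mixed_payoff om (ereal u1) (ereal u2)"
    "om \<le> 1" "u1 > u2"
  shows "om = 1"
proof (rule ccontr)
  assume "om \<noteq> 1"
  hence "0 < (1 - om) * (u1 - u2)" using assms by (intro mult_pos_pos) auto
  moreover have "u1 \<le> om * u1 + (1 - om) * u2" using assms(1)[rule_format, of 1] by (simp add: mp_fin)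
  ultimately show False by (simp add: algebra_simps)
qed

lemma ne_point0:
  assumes "\<forall>w\<in>{0..1}. mixed_payoff w (ereal u1) (ereal u2) \<le> mixed_payoff om (ereal u1) (ereal u2)"
    "0 \<le> om" "u1 < u2"
  shows "om = 0"
proof (rule ccontr)
  assume "om \<noteq> 0"
  hence "0 < om * (u2 - u1)" using assms by (intro mult_pos_pos) auto
  moreover have "u2 \<le> om * u1 + (1 - om) * u2" using assms(1)[rule_format, of 0] by (simp add: mp_fin)
  ultimately show False by (simp add: algebra_simps)
qed

lemma ne_ok1:
  assumes "u2 \<le> u1" "w \<in> {0..1}"
  shows "mixed_payoff w (ereal u1) (ereal u2) \<le> mixed_payoff 1 (ereal u1) (ereal u2)"
proof -
  have "(1 - w) * (u2 - u1) \<le> 0" using assms by (intro mult_nonneg_nonpos) auto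
  thus ?thesis by (simp add: mp_fin algebra_simps)
qed

lemma ne_ok0:
  assumes "u1 \<le> u2" "w \<in> {0..1}"
  shows "mixed_payoff w (ereal u1) (ereal u2) \<le> mixed_payoff 0 (ereal u1) (ereal u2)"
proof -
  have "w * (u1 - u2) \<le> 0" using assms by (intro mult_nonneg_nonpos) auto
  thus ?thesis by (simp add: mp_fin algebra_simps)
qed

lemma ne_inf1:
  assumes "\<forall>w\<in>{0..1}. mixed_payoff w (-\<infinity>) (ereal b) \<le> mixed_payoff om (-\<infinity>) (ereal b)" "0 \<le> om"
  shows "om = 0"
proof (rule ccontr)
  assume "om \<noteq> 0"
  hence "0 < om" using assms by simp
  hence "mixed_payoff om (-\<infinity>) (ereal b) = -\<infinity>" by (simp add: mixed_payoff_def)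
  moreover have "mixed_payoff 0 (-\<infinity>) (ereal b) = ereal b" by (simp add: mixed_payoff_def)
  ultimately show False using assms(1)[rule_format, of 0] by simp
qed

lemma ne_inf2:
  assumes "\<forall>w\<in>{0..1}. mixed_payoff w (ereal a) (-\<infinity>) \<le> mixed_payoff om (ereal a) (-\<infinity>)" "om \<le> 1"
  shows "om = 1"
proof (rule ccontr)
  assume "om \<noteq> 1"
  hence "0 < 1 - om" using assms by simp
  hence "mixed_payoff om (ereal a) (-\<infinity>) = -\<infinity>" by (simp add: mixed_payoff_def)
  moreover have "mixed_payoff 1 (ereal a) (-\<infinity>) = ereal a" by (simp add: mixed_payoff_def)
  ultimately show False using assms(1)[rule_format, of 1] by simp
qed

lemma thr_int:
  fixes L t :: real
  assumes "-L \<le> t" "t \<le> L"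
  shows "((\<lambda>x. if x \<le> t then 1 else 0::real) has_integral (t + L)) {-L..L}"
proof -
  have e: "(\<lambda>x. if x \<le> t then 1 else 0::real) = (\<lambda>x. if x \<in> {..t} then 1 else 0)" by auto
  have s: "{..t} \<inter> {-L..L} = {-L..t}" using assms by auto
  have "((\<lambda>x. 1::real) has_integral (t + L)) {-L..t}"
    using has_integral_const_real[of "1::real" "-L" t] assms by (simp add: content_real)
  thus ?thesis unfolding e has_integral_restrict_Int s .
qed

theorem theorem5:
  fixes L x1 x2 mu1 mu2 sg1 sg2 lam kl kq kp d pmin pmax p1 p2 :: real
    and k1 k2 :: nat
  assumes "L > 0" and "-L < x1" and "x1 < x2" and "x2 < L"
    and "k1 \<ge> 1" and "k2 \<ge> 1" and "mu1 > 0" and "mu2 > 0" and "lam > 0"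
    and "kl > 0" and "kq > 0" and "kp > 0" and "d > 0"
    and "p1 \<in> {pmin..pmax}" and "p2 \<in> {pmin..pmax}"
    and "(L + x1) * lam < real k1 * mu1" and "real k1 * mu1 \<le> (L + x2) * lam"
    and "(L - x2) * lam < real k2 * mu2" and "real k2 * mu2 \<le> (L - x1) * lam"
    and "real k1 * mu1 + real k2 * mu2 > 2 * L * lam"
  shows "\<exists>xs. xs \<in> {-L..L}
           \<and> pssg_eq L x1 x2 k1 mu1 sg1 k2 mu2 sg2 lam kl kq kp d p1 p2 xs = 0
           \<and> (\<forall>y\<in>{-L..L}. pssg_eq L x1 x2 k1 mu1 sg1 k2 mu2 sg2 lam kl kq kp d p1 p2 y = 0
                 \<longrightarrow> y = xs)
           \<and> L - real k2 * mu2 / lam < xs \<and> xs < real k1 * mu1 / lam - L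
           \<and> pssg_NE L x1 x2 k1 mu1 sg1 k2 mu2 sg2 lam kl kq kp d p1 p2
               (\<lambda>x. if x \<le> xs then 1 else 0)
           \<and> (\<forall>\<omega>. pssg_NE L x1 x2 k1 mu1 sg1 k2 mu2 sg2 lam kl kq kp d p1 p2 \<omega> \<longrightarrow>
                 (\<forall>x\<in>{-L..L}. x \<noteq> xs \<longrightarrow> \<omega> x = (if x \<le> xs then 1 else 0)))"
proof -
  note Lp = assms(1) and hx1 = assms(2) and hx12 = assms(3) and hx2 = assms(4)
  note k1 = assms(5) and k2 = assms(6) and mu1 = assms(7) and mu2 = assms(8) and lam = assms(9)
  note kl = assms(10) and kq = assms(11)
  define c1 where "c1 = real k1 * mu1 / lam"
  define c2 where "c2 = real k2 * mu2 / lam"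
  have c1a: "L + x1 < c1" unfolding c1_def using assms(16) lam by (simp add: field_simps)
  have c1b: "c1 \<le> L + x2" unfolding c1_def using assms(17) lam by (simp add: field_simps)
  have c2a: "L - x2 < c2" unfolding c2_def using assms(18) lam by (simp add: field_simps)
  have c2b: "c2 \<le> L - x1" unfolding c2_def using assms(19) lam by (simp add: field_simps)
  have c12: "2 * L < c1 + c2" unfolding c1_def c2_def using assms(20) lam by (simp add: field_simps)
  define al where "al = L - c2"
  define be where "be = c1 - L"
  have al1: "x1 \<le> al" and be1: "be \<le> x2" and albe: "al < be"
    unfolding al_def be_def using c2b c1b c12 by auto
  define Q1 where "Q1 = Qf k1 mu1 sg1 lam"
  define Q2 where "Q2 = Qf k2 mu2 sg2 lam"
  have qw1: "\<And>a. qwait k1 mu1 sg1 lam a = (if a < c1 then ereal (Q1 a) else \<infinity>)"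
    unfolding Q1_def c1_def by (rule qwait_eq)
  have qw2: "\<And>a. qwait k2 mu2 sg2 lam a = (if a < c2 then ereal (Q2 a) else \<infinity>)"
    unfolding Q2_def c2_def by (rule qwait_eq)
  have Q1m: "\<And>a b. 0 \<le> a \<Longrightarrow> a < b \<Longrightarrow> b < c1 \<Longrightarrow> Q1 a < Q1 b"
    unfolding Q1_def c1_def by (rule Qf_strict_mono[OF k1 mu1 lam])
  have Q2m: "\<And>a b. 0 \<le> a \<Longrightarrow> a < b \<Longrightarrow> b < c2 \<Longrightarrow> Q2 a < Q2 b"
    unfolding Q2_def c2_def by (rule Qf_strict_mono[OF k2 mu2 lam])
  define F where "F = (\<lambda>x. kp * d * (p1 - p2) + kl * (2 * x - x1 - x2) + kq * (Q1 (x + L) - Q2 (L - x)))"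
  let ?E = "pssg_eq L x1 x2 k1 mu1 sg1 k2 mu2 sg2 lam kl kq kp d p1 p2"
  have peq_mid: "?E x = ereal (F x)" if "al < x" "x < be" for x
  proof -
    have "x + L < c1" "L - x < c2" using that unfolding al_def be_def by auto
    thus ?thesis unfolding pssg_eq_def qw1 qw2 F_def by simp
  qed
  have peq_hi: "?E x = \<infinity>" if "be \<le> x" "x \<le> L" for x
  proof -
    have "\<not> x + L < c1" "L - x < c2" using that c12 unfolding al_def be_def by auto
    thus ?thesis unfolding pssg_eq_def qw1 qw2 using kq by simp
  qed
  have peq_lo: "?E x = -\<infinity>" if "-L \<le> x" "x \<le> al" for x
  proof -
    have "x + L < c1" "\<not> L - x < c2" using that c12 unfolding al_def be_def by auto
    thus ?thesis unfolding pssg_eq_def qw1 qw2 using kq by simp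
  qed
  have Fmono: "F x < F y" if "al < x" "x < y" "y < be" for x y
  proof -
    have "Q1 (x + L) < Q1 (y + L)" using that al1 hx1 unfolding be_def by (intro Q1m) auto
    moreover have "Q2 (L - y) < Q2 (L - x)" using that be1 hx2 unfolding al_def by (intro Q2m) auto
    ultimately have "kq * (Q1 (x + L) - Q2 (L - x)) < kq * (Q1 (y + L) - Q2 (L - y))"
      using kq by (intro mult_strict_left_mono) auto
    moreover have "kl * (2 * x - x1 - x2) < kl * (2 * y - x1 - x2)"
      using kl that by (intro mult_strict_left_mono) auto
    ultimately show ?thesis unfolding F_def by linarith
  qed
  have Fcont: "isCont F z" if "al < z" "z < be" for z
  proof -
    have t1: "((\<lambda>x. Q1 (x + L)) \<longlongrightarrow> Q1 (z + L)) (at z)"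
      unfolding Q1_def
      by (rule Qf_tendsto[OF k1 mu1 lam]) (use that al1 hx1 in \<open>auto intro!: tendsto_intros simp: be_def c1_def[symmetric]\<close>)
    have t2: "((\<lambda>x. Q2 (L - x)) \<longlongrightarrow> Q2 (L - z)) (at z)"
      unfolding Q2_def
      by (rule Qf_tendsto[OF k2 mu2 lam]) (use that be1 hx2 in \<open>auto intro!: tendsto_intros simp: al_def c2_def[symmetric]\<close>)
    show ?thesis unfolding isCont_def F_def by (intro tendsto_intros t1 t2)
  qed
  have ev_b: "eventually (\<lambda>x. al < x \<and> x < be) (at_left be)"
    using eventually_at_left_real[OF albe] by (rule eventually_mono) auto
  have ev_a: "eventually (\<lambda>x. al < x \<and> x < be) (at_right al)"
    using eventually_at_right_real[OF albe] by (rule eventually_mono) auto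
  have limb: "filterlim F at_top (at_left be)"
  proof -
    have h1: "filterlim (\<lambda>x. Q1 (x + L)) at_top (at_left be)"
      unfolding Q1_def
    proof (rule Qf_at_top[OF k1 mu1 lam])
      have "((\<lambda>x. x + L) \<longlongrightarrow> be + L) (at_left be)" by (intro tendsto_intros)
      thus "((\<lambda>x. x + L) \<longlongrightarrow> real k1 * mu1 / lam) (at_left be)" by (simp add: be_def c1_def)
      show "eventually (\<lambda>x. 0 < x + L \<and> x + L < real k1 * mu1 / lam) (at_left be)"
        using ev_b by (rule eventually_mono) (use al1 hx1 in \<open>auto simp: be_def c1_def[symmetric]\<close>)
    qed
    have h2: "((\<lambda>x. Q2 (L - x)) \<longlongrightarrow> Q2 (L - be)) (at_left be)"
      unfolding Q2_def
      by (rule Qf_tendsto[OF k2 mu2 lam]) (use albe be1 hx2 in \<open>auto intro!: tendsto_intros simp: al_def c2_def[symmetric]\<close>)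
    have h3: "((\<lambda>x. kp * d * (p1 - p2) + kl * (2 * x - x1 - x2) - kq * Q2 (L - x)) \<longlongrightarrow>
        kp * d * (p1 - p2) + kl * (2 * be - x1 - x2) - kq * Q2 (L - be)) (at_left be)"
      by (intro tendsto_intros h2)
    have "filterlim (\<lambda>x. (kp * d * (p1 - p2) + kl * (2 * x - x1 - x2) - kq * Q2 (L - x)) + kq * Q1 (x + L)) at_top (at_left be)"
      by (rule filterlim_tendsto_add_at_top[OF h3 filterlim_tendsto_pos_mult_at_top[OF tendsto_const kq h1]])
    moreover have "(\<lambda>x. (kp * d * (p1 - p2) + kl * (2 * x - x1 - x2) - kq * Q2 (L - x)) + kq * Q1 (x + L)) = F"
      unfolding F_def by (rule ext) (simp add: algebra_simps)
    ultimately show ?thesis by simp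
  qed
  have lima: "filterlim (\<lambda>x. - F x) at_top (at_right al)"
  proof -
    have h1: "filterlim (\<lambda>x. Q2 (L - x)) at_top (at_right al)"
      unfolding Q2_def
    proof (rule Qf_at_top[OF k2 mu2 lam])
      have "((\<lambda>x. L - x) \<longlongrightarrow> L - al) (at_right al)" by (intro tendsto_intros)
      thus "((\<lambda>x. L - x) \<longlongrightarrow> real k2 * mu2 / lam) (at_right al)" by (simp add: al_def c2_def)
      show "eventually (\<lambda>x. 0 < L - x \<and> L - x < real k2 * mu2 / lam) (at_right al)"
        using ev_a by (rule eventually_mono) (use be1 hx2 in \<open>auto simp: al_def c2_def[symmetric]\<close>)
    qed
    have h2: "((\<lambda>x. Q1 (x + L)) \<longlongrightarrow> Q1 (al + L)) (at_right al)"
      unfolding Q1_def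
      by (rule Qf_tendsto[OF k1 mu1 lam]) (use albe al1 hx1 in \<open>auto intro!: tendsto_intros simp: be_def c1_def[symmetric]\<close>)
    have h3: "((\<lambda>x. - (kp * d * (p1 - p2) + kl * (2 * x - x1 - x2)) - kq * Q1 (x + L)) \<longlongrightarrow>
        - (kp * d * (p1 - p2) + kl * (2 * al - x1 - x2)) - kq * Q1 (al + L)) (at_right al)"
      by (intro tendsto_intros h2)
    have "filterlim (\<lambda>x. (- (kp * d * (p1 - p2) + kl * (2 * x - x1 - x2)) - kq * Q1 (x + L)) + kq * Q2 (L - x)) at_top (at_right al)"
      by (rule filterlim_tendsto_add_at_top[OF h3 filterlim_tendsto_pos_mult_at_top[OF tendsto_const kq h1]])
    moreover have "(\<lambda>x. (- (kp * d * (p1 - p2) + kl * (2 * x - x1 - x2)) - kq * Q1 (x + L)) + kq * Q2 (L - x)) = (\<lambda>x. - F x)"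
      unfolding F_def by (rule ext) (simp add: algebra_simps)
    ultimately show ?thesis by simp
  qed
  obtain v where v: "al < v" "v < be" "1 \<le> F v"
  proof -
    have "eventually (\<lambda>x. 1 \<le> F x) (at_left be)" using limb unfolding filterlim_at_top by (rule spec)
    hence "eventually (\<lambda>x. (al < x \<and> x < be) \<and> 1 \<le> F x) (at_left be)" using ev_b by (simp add: eventually_conj_iff)
    from eventually_happens'[OF _ this] show ?thesis using that by auto
  qed
  obtain u where u: "al < u" "u < be" "1 \<le> - F u"
  proof -
    have "eventually (\<lambda>x. 1 \<le> - F x) (at_right al)" using lima unfolding filterlim_at_top by (rule spec)
    hence "eventually (\<lambda>x. (al < x \<and> x < be) \<and> 1 \<le> - F x) (at_right al)" using ev_a by (simp add: eventually_conj_iff)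
    from eventually_happens'[OF _ this] show ?thesis using that by auto
  qed
  have uv: "u < v"
  proof (rule ccontr)
    assume "\<not> u < v"
    hence "v = u \<or> v < u" by auto
    thus False using Fmono[of v u] u v by auto
  qed
  have "continuous_on {u..v} F"
    using u v by (intro continuous_at_imp_continuous_on ballI Fcont) auto
  then obtain xs where xs0: "u \<le> xs" "xs \<le> v" "F xs = 0"
    using IVT'[of F u 0 v] u v uv by auto
  have xs: "al < xs" "xs < be" using xs0 u v by auto
  have xsL: "-L \<le> xs" "xs \<le> L" using xs al1 be1 hx1 hx2 by auto
  have xs12: "x1 < xs" "xs < x2" using xs al1 be1 by auto
  define ws where "ws = (\<lambda>x::real. if x \<le> xs then 1 else (0::real))"
  have ws_int: "(ws has_integral (xs + L)) {-L..L}" unfolding ws_def by (rule thr_int[OF xsL])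
  have iw: "ws integrable_on {-L..L}" "integral {-L..L} ws = xs + L"
    using ws_int by (auto simp: has_integral_iff)
  define G where "G = (\<lambda>x. \<bar>x - x2\<bar> - \<bar>x - x1\<bar> + 2 * xs - x1 - x2)"
  have G1: "0 < G x" if "x < xs" for x using xs12 that unfolding G_def by (auto simp: abs_if)
  have G2: "G x < 0" if "xs < x" for x using xs12 that unfolding G_def by (auto simp: abs_if)
  have G3: "0 \<le> G x" if "x \<le> xs" for x using xs12 that unfolding G_def by (auto simp: abs_if)
  have G4: "G x \<le> 0" if "xs \<le> x" for x using xs12 that unfolding G_def by (auto simp: abs_if)
  define U1 where "U1 = (\<lambda>q x. - kl * \<bar>x - x1\<bar> - kp * d * p1 - kq * q)"
  define U2 where "U2 = (\<lambda>q x. - kl * \<bar>x - x2\<bar> - kp * d * p2 - kq * q)"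
  have Fx: "kp * d * p1 - kp * d * p2 + 2 * kl * xs - kl * x1 - kl * x2 + kq * Q1 (xs + L) - kq * Q2 (L - xs) = 0"
    using xs0(3) unfolding F_def by (simp add: algebra_simps)
  have Udiff: "U1 q1 x - U2 q2 x = kl * G x + (kq * (Q1 (xs + L) - q1) - kq * (Q2 (L - xs) - q2))" for q1 q2 x
  proof -
    have "U1 q1 x - U2 q2 x - (kl * G x + (kq * (Q1 (xs + L) - q1) - kq * (Q2 (L - xs) - q2)))
        = - (kp * d * p1 - kp * d * p2 + 2 * kl * xs - kl * x1 - kl * x2 + kq * Q1 (xs + L) - kq * Q2 (L - xs))"
      unfolding U1_def U2_def G_def by (simp add: algebra_simps)
    thus ?thesis using Fx by linarith
  qed
  have pfin1: "payoff kl kq kp d x1 p1 (ereal q) x = ereal (U1 q x)" for q x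
    unfolding U1_def by (simp add: pay_fin)
  have pfin2: "payoff kl kq kp d x2 p2 (ereal q) x = ereal (U2 q x)" for q x
    unfolding U2_def by (simp add: pay_fin)
  have q1s: "qwait k1 mu1 sg1 lam (xs + L) = ereal (Q1 (xs + L))" using xs unfolding qw1 be_def by simp
  have q2s: "qwait k2 mu2 sg2 lam (2 * L - (xs + L)) = ereal (Q2 (L - xs))" using xs unfolding qw2 al_def by simp
  have ws_NE: "pssg_NE L x1 x2 k1 mu1 sg1 k2 mu2 sg2 lam kl kq kp d p1 p2 ws"
  proof -
    have "\<forall>x\<in>{-L..L}. \<forall>w\<in>{0..1}. mixed_payoff w (ereal (U1 (Q1 (xs+L)) x)) (ereal (U2 (Q2 (L-xs)) x))
          \<le> mixed_payoff (ws x) (ereal (U1 (Q1 (xs+L)) x)) (ereal (U2 (Q2 (L-xs)) x))"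
    proof (intro ballI)
      fix x w :: real assume x: "x \<in> {-L..L}" and w: "w \<in> {0..1}"
      have D: "U1 (Q1 (xs+L)) x - U2 (Q2 (L-xs)) x = kl * G x" using Udiff[of "Q1 (xs+L)" x "Q2 (L-xs)"] by simp
      show "mixed_payoff w (ereal (U1 (Q1 (xs+L)) x)) (ereal (U2 (Q2 (L-xs)) x))
          \<le> mixed_payoff (ws x) (ereal (U1 (Q1 (xs+L)) x)) (ereal (U2 (Q2 (L-xs)) x))"
      proof (cases "x \<le> xs")
        case True
        have "0 \<le> kl * G x" using G3[OF True] kl by simp
        hence "U2 (Q2 (L-xs)) x \<le> U1 (Q1 (xs+L)) x" using D by linarith
        thus ?thesis using ne_ok1[OF _ w] True unfolding ws_def by simp
      next
        case False
        have "kl * G x \<le> 0" using G4[of x] False kl by (simp add: mult_nonneg_nonpos)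
        hence "U1 (Q1 (xs+L)) x \<le> U2 (Q2 (L-xs)) x" using D by linarith
        thus ?thesis using ne_ok0[OF _ w] False unfolding ws_def by simp
      qed
    qed
    moreover have "\<forall>x\<in>{-L..L}. 0 \<le> ws x \<and> ws x \<le> 1" unfolding ws_def by simp
    ultimately show ?thesis
      unfolding pssg_NE_def Let_def iw(2) q1s q2s pfin1 pfin2 using iw(1) by blast
  qed
  have NE_uniq: "\<omega> x = ws x"
    if NE: "pssg_NE L x1 x2 k1 mu1 sg1 k2 mu2 sg2 lam kl kq kp d p1 p2 \<omega>" and x: "x \<in> {-L..L}" "x \<noteq> xs"
    for \<omega> x
  proof -
    define A where "A = integral {-L..L} \<omega>"
    have b: "\<forall>x\<in>{-L..L}. 0 \<le> \<omega> x \<and> \<omega> x \<le> 1" and int: "\<omega> integrable_on {-L..L}"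
      and C: "\<forall>x\<in>{-L..L}. \<forall>w\<in>{0..1}.
          mixed_payoff w (payoff kl kq kp d x1 p1 (qwait k1 mu1 sg1 lam A) x) (payoff kl kq kp d x2 p2 (qwait k2 mu2 sg2 lam (2*L - A)) x)
          \<le> mixed_payoff (\<omega> x) (payoff kl kq kp d x1 p1 (qwait k1 mu1 sg1 lam A) x) (payoff kl kq kp d x2 p2 (qwait k2 mu2 sg2 lam (2*L - A)) x)"
      using NE unfolding pssg_NE_def Let_def A_def by auto
    have A0: "0 \<le> A" unfolding A_def using int b
      by (intro Henstock_Kurzweil_Integration.integral_nonneg) auto
    have A2: "A \<le> 2 * L"
    proof -
      have "A \<le> integral {-L..L} (\<lambda>_. 1::real)" unfolding A_def using int b
        by (intro integral_le Henstock_Kurzweil_Integration.integrable_const_ivl) auto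
      also have "\<dots> = 2 * L" using Lp by (simp add: content_real)
      finally show ?thesis .
    qed
    have c1p: "0 < c1" and c2p: "0 < c2" using c1a c2a hx1 hx2 by auto
    have nc1: "A < c1"
    proof (rule ccontr)
      assume na: "\<not> A < c1"
      have h2: "2*L - A < c2" using c12 na by auto
      have z: "\<omega> y = 0" if y: "y \<in> {-L..L}" for y
      proof -
        have "\<forall>w\<in>{0..1}. mixed_payoff w (-\<infinity>) (ereal (U2 (Q2 (2*L - A)) y))
            \<le> mixed_payoff (\<omega> y) (-\<infinity>) (ereal (U2 (Q2 (2*L - A)) y))"
          using bspec[OF C y] na h2 kq unfolding qw1 qw2 by (simp add: pay_inf pfin2)
        thus ?thesis using ne_inf1 b y by blast
      qed
      have "A = integral {-L..L} (\<lambda>_. 0::real)" unfolding A_def by (rule integral_cong) (use z in auto)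
      hence "A = 0" by simp
      thus False using na c1p by simp
    qed
    have nc2: "2*L - A < c2"
    proof (rule ccontr)
      assume na: "\<not> 2*L - A < c2"
      have z: "\<omega> y = 1" if y: "y \<in> {-L..L}" for y
      proof -
        have "\<forall>w\<in>{0..1}. mixed_payoff w (ereal (U1 (Q1 A) y)) (-\<infinity>)
            \<le> mixed_payoff (\<omega> y) (ereal (U1 (Q1 A) y)) (-\<infinity>)"
          using bspec[OF C y] na nc1 kq unfolding qw1 qw2 by (simp add: pay_inf pfin1)
        thus ?thesis using ne_inf2 b y by blast
      qed
      have "A = integral {-L..L} (\<lambda>_. 1::real)" unfolding A_def by (rule integral_cong) (use z in auto)
      hence "A = 2 * L" using Lp by (simp add: content_real)
      thus False using na c2p by simp
    qed
    define e where "e = kq * (Q1 (xs + L) - Q1 A) - kq * (Q2 (L - xs) - Q2 (2*L - A))"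
    have P: "(0 < kl * G y + e \<longrightarrow> \<omega> y = 1) \<and> (kl * G y + e < 0 \<longrightarrow> \<omega> y = 0)" if y: "y \<in> {-L..L}" for y
    proof -
      have CC: "\<forall>w\<in>{0..1}. mixed_payoff w (ereal (U1 (Q1 A) y)) (ereal (U2 (Q2 (2*L - A)) y))
            \<le> mixed_payoff (\<omega> y) (ereal (U1 (Q1 A) y)) (ereal (U2 (Q2 (2*L - A)) y))"
        using bspec[OF C y] nc1 nc2 unfolding qw1 qw2 by (simp add: pfin1 pfin2)
      have D: "U1 (Q1 A) y - U2 (Q2 (2*L - A)) y = kl * G y + e" unfolding e_def by (rule Udiff)
      show ?thesis using ne_point1[OF CC] ne_point0[OF CC] b y D by auto
    qed
    have AE: "A = xs + L"
    proof (rule ccontr)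
      assume "A \<noteq> xs + L"
      hence "A < xs + L \<or> xs + L < A" by auto
      thus False
      proof
        assume lt: "A < xs + L"
        have "Q1 A < Q1 (xs + L)" using A0 lt xs unfolding be_def by (intro Q1m) auto
        hence m1: "kq * Q1 A < kq * Q1 (xs + L)" using kq by simp
        have "Q2 (L - xs) < Q2 (2*L - A)" using lt nc2 xs al1 be1 hx2 by (intro Q2m) auto
        hence m2: "kq * Q2 (L - xs) < kq * Q2 (2*L - A)" using kq by simp
        have ep: "0 < e" unfolding e_def right_diff_distrib using m1 m2 by linarith
        have "integral {-L..L} ws \<le> A" unfolding A_def
        proof (rule integral_le[OF iw(1) int])
          fix y assume y: "y \<in> {-L..L}"
          show "ws y \<le> \<omega> y"
          proof (cases "y \<le> xs")
            case True
            have "0 \<le> kl * G y" using G3[OF True] kl by simp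
            thus ?thesis using P[OF y] ep True unfolding ws_def by auto
          next
            case False thus ?thesis using b y unfolding ws_def by auto
          qed
        qed
        thus False using lt iw(2) by simp
      next
        assume gt: "xs + L < A"
        have "Q1 (xs + L) < Q1 A" using xsL gt nc1 by (intro Q1m) auto
        hence m1: "kq * Q1 (xs + L) < kq * Q1 A" using kq by simp
        have "Q2 (2*L - A) < Q2 (L - xs)" using gt A2 xs unfolding al_def by (intro Q2m) auto
        hence m2: "kq * Q2 (2*L - A) < kq * Q2 (L - xs)" using kq by simp
        have en: "e < 0" unfolding e_def right_diff_distrib using m1 m2 by linarith
        have "A \<le> integral {-L..L} ws" unfolding A_def
        proof (rule integral_le[OF int iw(1)])
          fix y assume y: "y \<in> {-L..L}"
          show "\<omega> y \<le> ws y"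
          proof (cases "y \<le> xs")
            case True thus ?thesis using b y unfolding ws_def by auto
          next
            case False
            have "kl * G y \<le> 0" using G4[of y] False kl by (simp add: mult_nonneg_nonpos)
            thus ?thesis using P[OF y] en False unfolding ws_def by auto
          qed
        qed
        thus False using gt iw(2) by simp
      qed
    qed
    have e0: "e = 0" unfolding e_def AE by simp
    show ?thesis
    proof (cases "x < xs")
      case True
      have "0 < kl * G x" using G1[OF True] kl by simp
      thus ?thesis using P[OF x(1)] e0 True unfolding ws_def by auto
    next
      case False
      hence "xs < x" using x(2) by simp
      hence "kl * G x < 0" using G2 kl by (simp add: mult_pos_neg)
      thus ?thesis using P[OF x(1)] e0 \<open>xs < x\<close> unfolding ws_def by auto
    qed
  qed
  show ?thesis
  proof (intro exI conjI ballI impI allI)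
    show "xs \<in> {-L..L}" using xsL by simp
    show "?E xs = 0" using peq_mid[OF xs] xs0(3) by (simp add: zero_ereal_def)
    fix y assume y: "y \<in> {-L..L}" and Ey: "?E y = 0"
    show "y = xs"
    proof -
      have "al < y" using peq_lo[of y] y Ey by (cases "y \<le> al") auto
      moreover have "y < be" using peq_hi[of y] y Ey by (cases "be \<le> y") auto
      ultimately have "F y = 0" using peq_mid[of y] Ey by (simp add: zero_ereal_def)
      thus "y = xs" using Fmono[of y xs] Fmono[of xs y] xs xs0(3) \<open>al < y\<close> \<open>y < be\<close>
        by (cases y xs rule: linorder_cases) auto
    qed
  next
    show "L - real k2 * mu2 / lam < xs" using xs by (simp add: al_def c2_def)
    show "xs < real k1 * mu1 / lam - L" using xs by (simp add: be_def c1_def)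
    show "pssg_NE L x1 x2 k1 mu1 sg1 k2 mu2 sg2 lam kl kq kp d p1 p2 (\<lambda>x. if x \<le> xs then 1 else 0)"
      using ws_NE unfolding ws_def .
  next
    fix \<omega> x assume "pssg_NE L x1 x2 k1 mu1 sg1 k2 mu2 sg2 lam kl kq kp d p1 p2 \<omega>" "x \<in> {-L..L}" "x \<noteq> xs"
    thus "\<omega> x = (if x \<le> xs then 1 else 0)" using NE_uniq unfolding ws_def by blast
  qed
qed

end
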